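(* Let $p\in[1,\infty]$, let $f\in L^p(0,1)$ and define $F(m)=\int_0^m f(\omega)\,d\omega$ for $m\in[0,1]$. Let $\mu$ be a Borel probability measure on $\mathbb{R}$ with right-continuous cumulative distribution function $M(x)=\mu((-\infty,x])$. Then $F\circ M\in BV(\mathbb{R})$, and its distributional derivative is the measure $g\,\mu$, where, $\mu$-a.e., $$g(x)=\begin{cases} f(M(x)), & \mu(\{x\})=0,\\[1mm] \dfrac{F(M(x))-F(M(x-))}{\mu(\{x\})}, & \mu(\{x\})\neq 0.\end{cases}$$ Moreover $g\in L^p(\mathbb{R},\mu)$ with $\|g\|_{L^p(\mathbb{R},\mu)}\le \|f\|_{L^p(0,1)}$, and equality holds if $\mu$ has no atoms.
   Context: $M(x-)$ denotes the left limit of $M$ at $x$. *)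

theory Defs
  imports "HOL-Probability.Probability"
begin

definition in_Lp :: "'a measure \<Rightarrow> ennreal \<Rightarrow> ('a \<Rightarrow> real) \<Rightarrow> bool" where
  "in_Lp M p f \<longleftrightarrow> f \<in> borel_measurable M \<and>
     (if p = \<infinity> then (\<exists>C. AE x in M. \<bar>f x\<bar> \<le> C)
      else integrable M (\<lambda>x. \<bar>f x\<bar> powr enn2real p))"

definition Lp_norm :: "'a measure \<Rightarrow> ennreal \<Rightarrow> ('a \<Rightarrow> real) \<Rightarrow> real" where
  "Lp_norm M p f =
     (if p = \<infinity> then real_of_ereal (esssup M (\<lambda>x. ereal \<bar>f x\<bar>))
      else (LINT x|M. \<bar>f x\<bar> powr enn2real p) powr (1 / enn2real p))"

definition bounded_variation :: "(real \<Rightarrow> real) \<Rightarrow> bool" where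
  "bounded_variation u \<longleftrightarrow>
     (\<exists>B. \<forall>xs. sorted xs \<longrightarrow>
        (\<Sum>i<length xs - 1. \<bar>u (xs ! Suc i) - u (xs ! i)\<bar>) \<le> B)"

definition test_function :: "(real \<Rightarrow> real) \<Rightarrow> bool" where
  "test_function \<phi> \<longleftrightarrow>
     (\<forall>k x. ((deriv ^^ k) \<phi>) differentiable (at x)) \<and>
     (\<exists>R. \<forall>x. R < \<bar>x\<bar> \<longrightarrow> \<phi> x = 0)"

end

theory Submission
  imports Defs
begin

lemma powr_convex_0:
  fixes r a b t :: real
  assumes r: "1 \<le> r" and ab: "0 \<le> a" "0 \<le> b" and t: "0 < t" "t < 1"
  shows "((1 - t) * a + t * b) powr r \<le> (1 - t) * a powr r + t * b powr r"
proof -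
  have key: "(s * c) powr r \<le> s * c powr r" if "0 \<le> s" "s \<le> 1" "0 \<le> c" for s c :: real
  proof -
    have "(s * c) powr r = s powr r * c powr r" using that by (simp add: powr_mult)
    also have "s powr r \<le> s powr 1" using powr_mono'[OF r, of s] that by simp
    then have "s powr r * c powr r \<le> s powr 1 * c powr r" by (simp add: mult_right_mono)
    finally show ?thesis using that by simp
  qed
  show ?thesis
  proof (cases "a = 0 \<or> b = 0")
    case True
    then show ?thesis
    proof
      assume "a = 0" then show ?thesis using key[of t b] t ab r by simp
    next
      assume "b = 0" then show ?thesis using key[of "1 - t" a] t ab r by simp
    qed
  next
    case False
    then have "a \<in> {0<..}" "b \<in> {0<..}" using ab by auto
    from convex_onD[OF powr_convex[OF r] _ _ this] t show ?thesis
      by simp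
  qed
qed

lemma abs_powr_convex:
  fixes r :: real assumes r: "1 \<le> r"
  shows "convex_on UNIV (\<lambda>x. \<bar>x\<bar> powr r)"
proof (rule convex_onI)
  fix t x y :: real assume t: "0 < t" "t < 1"
  have "\<bar>(1 - t) * x + t * y\<bar> \<le> \<bar>(1 - t) * x\<bar> + \<bar>t * y\<bar>"
    by (rule abs_triangle_ineq)
  also have "\<dots> = (1 - t) * \<bar>x\<bar> + t * \<bar>y\<bar>"
    using t by (simp add: abs_mult)
  finally have "\<bar>(1 - t) *\<^sub>R x + t *\<^sub>R y\<bar> \<le> (1 - t) * \<bar>x\<bar> + t * \<bar>y\<bar>"
    by simp
  then have "\<bar>(1 - t) *\<^sub>R x + t *\<^sub>R y\<bar> powr r \<le> ((1 - t) * \<bar>x\<bar> + t * \<bar>y\<bar>) powr r"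
    using r by (intro powr_mono2) auto
  also have "\<dots> \<le> (1 - t) * \<bar>x\<bar> powr r + t * \<bar>y\<bar> powr r"
    by (rule powr_convex_0[OF r]) (use t in auto)
  finally show "\<bar>(1 - t) *\<^sub>R x + t *\<^sub>R y\<bar> powr r \<le> (1 - t) * \<bar>x\<bar> powr r + t * \<bar>y\<bar> powr r" .
qed simp

lemma Lp_cong_AE:
  assumes [measurable]: "a \<in> borel_measurable N" "b \<in> borel_measurable N"
    and ae: "AE x in N. a x = b x"
  shows "in_Lp N q a = in_Lp N q b" "Lp_norm N q a = Lp_norm N q b"
proof -
  have bd: "(AE x in N. \<bar>a x\<bar> \<le> C) = (AE x in N. \<bar>b x\<bar> \<le> C)" for C
  proof
    assume "AE x in N. \<bar>a x\<bar> \<le> C" with ae show "AE x in N. \<bar>b x\<bar> \<le> C"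
      by eventually_elim simp
  next
    assume "AE x in N. \<bar>b x\<bar> \<le> C" with ae show "AE x in N. \<bar>a x\<bar> \<le> C"
      by eventually_elim simp
  qed
  have ae2: "AE x in N. \<bar>a x\<bar> powr enn2real q = \<bar>b x\<bar> powr enn2real q"
    using ae by eventually_elim simp
  have ae3: "AE x in N. ereal \<bar>a x\<bar> = ereal \<bar>b x\<bar>"
    using ae by eventually_elim simp
  have i: "integrable N (\<lambda>x. \<bar>a x\<bar> powr enn2real q) = integrable N (\<lambda>x. \<bar>b x\<bar> powr enn2real q)"
    by (rule integrable_cong_AE[OF _ _ ae2]) measurable
  show "in_Lp N q a = in_Lp N q b" by (simp add: in_Lp_def bd i)
  have e: "esssup N (\<lambda>x. ereal \<bar>a x\<bar>) = esssup N (\<lambda>x. ereal \<bar>b x\<bar>)"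
    by (rule esssup_AE_cong[OF _ _ ae3]) measurable
  have j: "(\<integral>x. \<bar>a x\<bar> powr enn2real q \<partial>N) = (\<integral>x. \<bar>b x\<bar> powr enn2real q \<partial>N)"
    by (rule integral_cong_AE[OF _ _ ae2]) measurable
  show "Lp_norm N q a = Lp_norm N q b" by (simp add: Lp_norm_def e j)
qed

lemma Lp_distr:
  assumes T[measurable]: "T \<in> measurable N borel" and a[measurable]: "a \<in> borel_measurable borel"
  shows "in_Lp (distr N borel T) q a = in_Lp N q (\<lambda>x. a (T x))"
    "Lp_norm (distr N borel T) q a = Lp_norm N q (\<lambda>x. a (T x))"
proof -
  have AEeq: "(AE x in distr N borel T. P x) = (AE x in N. P (T x))"
    if "{x \<in> space borel. P x} \<in> sets borel" for P
    by (rule AE_distr_iff[OF T that])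
  have bd: "(AE x in distr N borel T. \<bar>a x\<bar> \<le> C) = (AE x in N. \<bar>a (T x)\<bar> \<le> C)" for C
    by (rule AEeq) measurable
  have i: "integrable (distr N borel T) (\<lambda>x. \<bar>a x\<bar> powr enn2real q) =
      integrable N (\<lambda>x. \<bar>a (T x)\<bar> powr enn2real q)"
    by (rule integrable_distr_eq[OF T]) measurable
  have m1: "a \<in> borel_measurable (distr N borel T)" by simp
  have m2: "(\<lambda>x. a (T x)) \<in> borel_measurable N" by measurable
  show "in_Lp (distr N borel T) q a = in_Lp N q (\<lambda>x. a (T x))"
    using m1 m2 by (simp add: in_Lp_def bd i)
  have m3: "(\<lambda>x. ereal \<bar>a x\<bar>) \<in> borel_measurable (distr N borel T)" by simp
  have m4: "(\<lambda>x. ereal \<bar>a (T x)\<bar>) \<in> borel_measurable N" by measurable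
  have bd2: "(AE x in distr N borel T. ereal \<bar>a x\<bar> \<le> z) = (AE x in N. ereal \<bar>a (T x)\<bar> \<le> z)" for z
    by (rule AEeq) measurable
  have e: "esssup (distr N borel T) (\<lambda>x. ereal \<bar>a x\<bar>) = esssup N (\<lambda>x. ereal \<bar>a (T x)\<bar>)"
    unfolding esssup_eq_AE[OF m3] esssup_eq_AE[OF m4] bd2 ..
  have j: "(\<integral>x. \<bar>a x\<bar> powr enn2real q \<partial>distr N borel T) = (\<integral>x. \<bar>a (T x)\<bar> powr enn2real q \<partial>N)"
    by (rule integral_distr[OF T]) measurable
  show "Lp_norm (distr N borel T) q a = Lp_norm N q (\<lambda>x. a (T x))"
    by (simp add: Lp_norm_def e j)
qed

lemma test_props:
  assumes "test_function \<phi>"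
  obtains R B where "0 \<le> R" "\<And>x. R < \<bar>x\<bar> \<Longrightarrow> \<phi> x = 0" "\<And>x. R < \<bar>x\<bar> \<Longrightarrow> deriv \<phi> x = 0"
    "\<And>x. (\<phi> has_real_derivative deriv \<phi> x) (at x)" "continuous_on UNIV (deriv \<phi>)"
    "continuous_on UNIV \<phi>" "\<And>x. \<bar>\<phi> x\<bar> \<le> B"
proof -
  from assms obtain R0 where R0: "\<And>x. R0 < \<bar>x\<bar> \<Longrightarrow> \<phi> x = 0" and d: "\<And>k x. ((deriv ^^ k) \<phi>) differentiable (at x)"
    unfolding test_function_def by blast
  define R where "R = max R0 0"
  have R: "0 \<le> R" "\<And>x. R < \<bar>x\<bar> \<Longrightarrow> \<phi> x = 0" using R0 by (auto simp: R_def)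
  have d0: "\<phi> differentiable (at x)" for x using d[of 0 x] by simp
  have d1: "deriv \<phi> differentiable (at x)" for x using d[of 1 x] by simp
  have D: "(\<phi> has_real_derivative deriv \<phi> x) (at x)" for x
    using d0 DERIV_deriv_iff_real_differentiable by blast
  have c1: "continuous_on UNIV (deriv \<phi>)"
    using d1 by (intro differentiable_imp_continuous_on) (auto simp: differentiable_on_def differentiable_at_withinI)
  have c0: "continuous_on UNIV \<phi>"
    using d0 by (intro differentiable_imp_continuous_on) (auto simp: differentiable_on_def differentiable_at_withinI)
  have dz: "deriv \<phi> x = 0" if x: "R < \<bar>x\<bar>" for x
  proof -
    have "((\<lambda>_. 0) has_real_derivative 0) (at x)" by simp
    moreover have "open {y. R < \<bar>y\<bar>}" by (intro open_Collect_less continuous_intros)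
    ultimately have "(\<phi> has_real_derivative 0) (at x)"
      by (rule has_field_derivative_transform_within_open) (use x R in auto)
    then show ?thesis by (rule DERIV_imp_deriv)
  qed
  obtain B where B: "\<And>x. x \<in> {-R..R} \<Longrightarrow> norm (\<phi> x) \<le> B" "B \<ge> 0"
    using continuous_on_compact_bound[OF compact_Icc continuous_on_subset[OF c0]] by blast
  have "\<bar>\<phi> x\<bar> \<le> B" for x
  proof (cases "R < \<bar>x\<bar>")
    case False
    then have "x \<in> {-R..R}" by auto
    then show ?thesis using B(1)[of x] by simp
  qed (use B R(2) in simp)
  then show ?thesis using that R dz D c1 c0 by blast
qed

lemma test_FTC:
  assumes "test_function \<phi>"
  shows "(\<integral>x. indicator {q..} x * deriv \<phi> x \<partial>lborel) = - \<phi> q"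
    "integrable lborel (deriv \<phi>)"
proof -
  obtain R B where R: "0 \<le> R" "\<And>x. R < \<bar>x\<bar> \<Longrightarrow> \<phi> x = 0" "\<And>x. R < \<bar>x\<bar> \<Longrightarrow> deriv \<phi> x = 0"
    "\<And>x. (\<phi> has_real_derivative deriv \<phi> x) (at x)" "continuous_on UNIV (deriv \<phi>)"
    using test_props[OF assms] by metis
  define T where "T = max R \<bar>q\<bar> + 1"
  have qT: "q \<le> T" "R < T" "R < \<bar>T\<bar>" unfolding T_def using R(1) by auto
  have "(\<integral>x. indicator {q..} x * deriv \<phi> x \<partial>lborel) = (\<integral>x. indicator {q..T} x *\<^sub>R deriv \<phi> x \<partial>lborel)"
  proof (rule Bochner_Integration.integral_cong[OF refl])
    fix x
    show "indicator {q..} x * deriv \<phi> x = indicator {q..T} x *\<^sub>R deriv \<phi> x"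
      using R(3)[of x] qT by (cases "x \<le> T") (auto split: split_indicator)
  qed
  also have "\<dots> = \<phi> T - \<phi> q"
  proof (rule integral_FTC_atLeastAtMost[OF qT(1)])
    fix x show "(\<phi> has_vector_derivative deriv \<phi> x) (at x within {q..T})"
      using R(4)[of x] by (simp add: has_real_derivative_iff_has_vector_derivative[symmetric] has_field_derivative_at_within)
  next
    show "continuous_on {q..T} (deriv \<phi>)" using R(5) by (rule continuous_on_subset) simp
  qed
  also have "\<phi> T = 0" using R(2) qT by simp
  finally show "(\<integral>x. indicator {q..} x * deriv \<phi> x \<partial>lborel) = - \<phi> q" by simp
  have "set_integrable lborel {-R..R} (deriv \<phi>)"
    by (rule borel_integrable_atLeastAtMost') (use R(5) in \<open>rule continuous_on_subset\<close>, simp)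
  then have "integrable lborel (\<lambda>x. indicator {-R..R} x *\<^sub>R deriv \<phi> x)"
    by (simp add: set_integrable_def)
  moreover have "indicator {-R..R} x *\<^sub>R deriv \<phi> x = deriv \<phi> x" for x
    using R(3)[of x] by (cases "R < \<bar>x\<bar>") (auto split: split_indicator)
  ultimately show "integrable lborel (deriv \<phi>)"
    by (metis (no_types, lifting) ext)
qed

context
  fixes \<mu> :: "real measure" and f F M g :: "real \<Rightarrow> real" and p :: ennreal
  assumes p: "1 \<le> p"
    and f: "in_Lp (restrict_space lborel {0<..<1}) p f"
    and F_def: "\<And>m. F m = (LINT w:{0..m}|lborel. f w)"
    and mu: "prob_space \<mu>" "sets \<mu> = sets borel"
    and M_def: "\<And>x. M x = measure \<mu> {..x}"
    and g_def: "\<And>x. g x =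
          (if measure \<mu> {x} = 0 then f (M x)
           else (F (M x) - F (Lim (at_left x) M)) / measure \<mu> {x})"
begin

abbreviation "U \<equiv> restrict_space lborel {0<..<1::real}"

interpretation mu: cdf_distribution \<mu>
  unfolding cdf_distribution_def real_distribution_def real_distribution_axioms_def
  using mu by auto

lemma M_eq: "M = cdf \<mu>"
  by (auto simp: M_def cdf_def)

lemma space_U: "space U = {0<..<1}"
  by (simp add: space_restrict_space)

lemma U_prob: "prob_space U"
  by (auto simp add: emeasure_restrict_space space_restrict_space intro!: prob_spaceI)

interpretation U: prob_space U by (rule U_prob)

lemma sets_U: "sets U = sets (restrict_space borel {0<..<1})"
  by (simp add: sets_restrict_space)

lemma I_meas[measurable]: "mu.I \<in> borel_measurable U"
  using mu.measurable_CI measurable_cong_sets[OF sets_U refl] by blast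

lemma distr_U: "distr U borel mu.I = \<mu>"
  by (rule mu.distr_I_eq_M)

lemma pseudo: "0 < w \<Longrightarrow> w < 1 \<Longrightarrow> w \<le> M x \<longleftrightarrow> mu.I w \<le> x"
  unfolding M_eq by (rule mu.pseudoinverse)

lemma M_bounds: "0 \<le> M x" "M x \<le> 1"
  unfolding M_eq by (auto intro: mu.cdf_nonneg mu.cdf_bounded_prob)

lemma M_mono: "x \<le> y \<Longrightarrow> M x \<le> M y"
  unfolding M_eq by (rule mu.cdf_nondecreasing)

lemma f_meas: "f \<in> borel_measurable U"
  using f by (simp add: in_Lp_def)

lemma f_int: "integrable U f"
proof (cases "p = \<infinity>")
  case True
  then obtain C where C: "AE x in U. \<bar>f x\<bar> \<le> C" using f by (auto simp: in_Lp_def)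
  show ?thesis
    apply (rule Bochner_Integration.integrable_bound[where f="\<lambda>_::real. C"])
    using C f_meas by auto
next
  case False
  define r where "r = enn2real p"
  have "enn2real 1 \<le> enn2real p"
    by (rule enn2real_mono[OF p]) (use False in \<open>simp add: less_top[symmetric]\<close>)
  then have r1: "1 \<le> r" unfolding r_def by simp
  have int: "integrable U (\<lambda>x. \<bar>f x\<bar> powr r)" using f False by (simp add: in_Lp_def r_def)
  show ?thesis
  proof (rule Bochner_Integration.integrable_bound[of _ "\<lambda>x. 1 + \<bar>f x\<bar> powr r"])
    show "integrable U (\<lambda>x. 1 + \<bar>f x\<bar> powr r)" using int by simp
    show "f \<in> borel_measurable U" by (rule f_meas)
    show "AE x in U. norm (f x) \<le> norm (1 + \<bar>f x\<bar> powr r)"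
    proof (intro AE_I2)
      fix x
      have "\<bar>f x\<bar> \<le> 1 + \<bar>f x\<bar> powr r"
      proof (cases "\<bar>f x\<bar> \<le> 1")
        case False
        then have "\<bar>f x\<bar> powr 1 \<le> \<bar>f x\<bar> powr r" using r1 by (intro powr_mono) auto
        then show ?thesis by simp
      qed (smt (verit) powr_ge_zero)
      then show "norm (f x) \<le> norm (1 + \<bar>f x\<bar> powr r)" by simp
    qed
  qed
qed

lemma f_meas_borel: "f \<in> borel_measurable (restrict_space borel {0<..<1})"
  using f_meas measurable_cong_sets[OF sets_U refl] by blast

lemma f0_meas: "(\<lambda>x. indicator {0<..<1} x * f x) \<in> borel_measurable borel"
proof -
  have "(\<lambda>x. if x \<in> {0<..<1} then f x else 0) \<in> borel_measurable borel"
    using measurable_restrict_space_iff[of "{0<..<1::real}" borel 0 borel f] f_meas_borel by simp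
  then show ?thesis
    by (rule measurable_cong[THEN iffD1, rotated]) (auto split: split_indicator)
qed

lemma fA_meas:
  assumes A: "A \<in> sets borel" "A \<subseteq> {0..1}"
  shows "(\<lambda>x. indicator A x * f x) \<in> borel_measurable borel"
proof (rule measurable_discrete_difference[where X="{0,1}"])
  show "(\<lambda>x. indicator A x * (indicator {0<..<1} x * f x)) \<in> borel_measurable borel"
    using f0_meas A(1) by measurable
  fix x assume "x \<notin> {0::real,1}"
  then show "indicator A x * (indicator {0<..<1} x * f x) = indicator A x * f x"
    using A(2) by (auto split: split_indicator)
qed auto

lemma F_eq:
  assumes c: "0 \<le> c" "c \<le> 1"
  shows "F c = (\<integral>u. indicator {..c} u * f u \<partial>U)"
proof -
  have "F c = (\<integral>w. indicator {0..c} w * f w \<partial>lborel)"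
    by (simp add: F_def set_lebesgue_integral_def)
  also have "\<dots> = (\<integral>w. indicator {0<..<1} w *\<^sub>R (indicator {..c} w * f w) \<partial>lborel)"
  proof (rule integral_cong_AE)
    show "(\<lambda>w. indicator {0..c} w * f w) \<in> borel_measurable lborel"
      using fA_meas[of "{0..c}"] c by simp
    have "(\<lambda>w. indicator {..c} w * (indicator {0<..<1} w * f w)) \<in> borel_measurable borel"
      using f0_meas by measurable
    then show "(\<lambda>w. indicator {0<..<1} w *\<^sub>R (indicator {..c} w * f w)) \<in> borel_measurable lborel"
      by (simp add: mult_ac)
    have "AE w in lborel. w \<noteq> 0 \<and> w \<noteq> 1"
      using AE_lborel_singleton[of 0] AE_lborel_singleton[of 1] by eventually_elim auto
    then show "AE w in lborel. indicator {0..c} w * f w = indicator {0<..<1} w *\<^sub>R (indicator {..c} w * f w)"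
      by eventually_elim (use c in \<open>auto split: split_indicator\<close>)
  qed
  also have "\<dots> = (\<integral>u. indicator {..c} u * f u \<partial>U)"
    by (rule integral_restrict_space[symmetric]) simp
  finally show ?thesis .
qed

definition "L x = measure \<mu> {..<x}"

lemma Lim_L: "Lim (at_left x) M = L x"
  unfolding L_def M_eq by (rule tendsto_Lim[OF trivial_limit_at_left_real mu.cdf_at_left])

lemma atom_eq: "measure \<mu> {x} = M x - L x"
proof -
  have "{..x} = {..<x} \<union> {x}" by auto
  then have "measure \<mu> {..x} = measure \<mu> {..<x} + measure \<mu> {x}"
    using mu.finite_measure_Union[of "{..<x}" "{x}"] mu by simp
  then show ?thesis by (simp add: M_def L_def)
qed

lemma L_bounds: "0 \<le> L x" "L x \<le> M x"
  using atom_eq[of x] measure_nonneg[of \<mu> "{x}"] by (auto simp: L_def)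

lemma I_lt: "0 < w \<Longrightarrow> w < 1 \<Longrightarrow> mu.I w < x \<Longrightarrow> w \<le> L x"
proof -
  assume w: "0 < w" "w < 1" "mu.I w < x"
  have "w \<le> M (mu.I w)" using pseudo[OF w(1,2)] by simp
  also have "\<dots> \<le> L x" unfolding M_def L_def
    using w(3) mu by (intro mu.finite_measure_mono) auto
  finally show ?thesis .
qed

lemma I_ge: "0 < w \<Longrightarrow> w < 1 \<Longrightarrow> x \<le> mu.I w \<Longrightarrow> L x \<le> w"
proof -
  assume w: "0 < w" "w < 1" "x \<le> mu.I w"
  have lim: "(M \<longlongrightarrow> L x) (at_left x)"
    unfolding L_def M_eq by (rule mu.cdf_at_left)
  show ?thesis
  proof (rule tendsto_upperbound[OF lim _ trivial_limit_at_left_real])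
    show "\<forall>\<^sub>F y in at_left x. M y \<le> w"
      using eventually_at_left_real[of "x - 1" x, simplified]
    proof (rule eventually_mono)
      fix y assume "x - 1 < y \<and> y < x"
      then have "\<not> mu.I w \<le> y" using w by auto
      then show "M y \<le> w" using pseudo[OF w(1,2), of y] by simp
    qed
  qed
qed

lemma I_nonatom: "0 < w \<Longrightarrow> w < 1 \<Longrightarrow> measure \<mu> {mu.I w} = 0 \<Longrightarrow> M (mu.I w) = w"
  using I_ge[of w "mu.I w"] pseudo[of w "mu.I w"] atom_eq[of "mu.I w"] by auto

lemma g_nonatom: "0 < w \<Longrightarrow> w < 1 \<Longrightarrow> measure \<mu> {mu.I w} = 0 \<Longrightarrow> g (mu.I w) = f w"
  using I_nonatom g_def by simp

lemma M_meas[measurable]: "M \<in> borel_measurable borel"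
  unfolding M_eq by (rule mu.measurable_C)

lemma g_meas[measurable]: "g \<in> borel_measurable borel"
proof (rule measurable_discrete_difference[where X="{x. measure \<mu> {x} > 0}"])
  have c: "(\<lambda>x. indicator {0<..<1} (M x) * f (M x)) \<in> borel_measurable borel"
    using measurable_compose[OF M_meas f0_meas] .
  show "(\<lambda>x. if M x = 0 then f 0 else if M x = 1 then f 1
      else indicator {0<..<1} (M x) * f (M x)) \<in> borel_measurable borel"
    using c by measurable
  show "countable {x. measure \<mu> {x} > 0}" by (rule mu.countable_atoms)
  fix x assume "x \<notin> {x. measure \<mu> {x} > 0}"
  then have "measure \<mu> {x} = 0" using measure_nonneg[of \<mu> "{x}"] by simp
  then show "(if M x = 0 then f 0 else if M x = 1 then f 1
      else indicator {0<..<1} (M x) * f (M x)) = g x"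
    using M_bounds[of x] by (auto simp: g_def split: split_indicator)
qed auto

abbreviation "G \<equiv> vimage_algebra {0<..<1} mu.I borel"

lemma sets_G: "sets G = {mu.I -` A \<inter> {0<..<1} | A. A \<in> sets borel}"
  by (rule sets_vimage_algebra2) simp

lemma subalg: "subalgebra U G"
  unfolding subalgebra_def
proof
  show "space G = space U" by (simp add: space_U)
  show "sets G \<subseteq> sets U"
  proof
    fix B assume "B \<in> sets G"
    then obtain A where A: "A \<in> sets borel" "B = mu.I -` A \<inter> {0<..<1}" using sets_G by auto
    then show "B \<in> sets U" using measurable_sets[OF I_meas A(1)] space_U by simp
  qed
qed

interpretation Gs: finite_measure_subalgebra U G
  by unfold_locales (rule subalg)

abbreviation "h \<equiv> real_cond_exp U G f"

lemma I_meas_G[measurable]: "mu.I \<in> borel_measurable G"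
  by (rule measurable_vimage_algebra1) simp

lemma h_const:
  assumes w: "w1 \<in> {0<..<1}" "w2 \<in> {0<..<1}" "mu.I w1 = mu.I w2"
  shows "h w1 = h w2"
proof -
  have "h -` {h w1} \<inter> space G \<in> sets G"
    by (rule measurable_sets[OF borel_measurable_cond_exp]) simp
  then obtain A where A: "h -` {h w1} \<inter> {0<..<1} = mu.I -` A \<inter> {0<..<1}"
    using sets_G by auto
  have "w1 \<in> mu.I -` A \<inter> {0<..<1}" using A[symmetric] w by auto
  then have "w2 \<in> mu.I -` A \<inter> {0<..<1}" using w by auto
  then have "w2 \<in> h -` {h w1}" using A by auto
  then show ?thesis by simp
qed

lemma ind_meas_U[measurable]: "A \<in> sets borel \<Longrightarrow> (indicator A :: real \<Rightarrow> real) \<in> borel_measurable U"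
  by (rule measurable_restrict_space1) simp

lemma ind_f_int: "A \<in> sets borel \<Longrightarrow> integrable U (\<lambda>u. indicator A u * f u)"
  by (rule Bochner_Integration.integrable_bound[OF f_int])
     (use f_meas in \<open>auto split: split_indicator\<close>)

lemma atom_int:
  assumes x: "measure \<mu> {x} \<noteq> 0"
  shows "(\<integral>u. indicator (mu.I -` {x} \<inter> {0<..<1}) u * f u \<partial>U) = F (M x) - F (L x)"
proof -
  let ?J = "mu.I -` {x} \<inter> {0<..<1}"
  have "(\<integral>u. indicator ?J u * f u \<partial>U) =
      (\<integral>u. indicator {..M x} u * f u - indicator {..L x} u * f u \<partial>U)"
  proof (rule integral_cong_AE)
    have "?J \<in> sets U" using measurable_sets[OF I_meas, of "{x}"] space_U by simp
    then show "(\<lambda>u. indicator ?J u * f u) \<in> borel_measurable U" using f_meas by measurable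
    show "(\<lambda>u. indicator {..M x} u * f u - indicator {..L x} u * f u) \<in> borel_measurable U"
      using f_meas by measurable
    have "AE u in lborel. u \<in> {0<..<1} \<longrightarrow> u \<noteq> L x"
      using AE_lborel_singleton[of "L x"] by eventually_elim auto
    then have "AE u in U. u \<noteq> L x"
      by (subst AE_restrict_space_iff) auto
    then show "AE u in U. indicator ?J u * f u = indicator {..M x} u * f u - indicator {..L x} u * f u"
    proof (rule AE_mp[OF _ AE_I2], intro impI)
      fix u assume u: "u \<in> space U" "u \<noteq> L x"
      then have u01: "0 < u" "u < 1" by (auto simp: space_U)
      consider "mu.I u = x" | "mu.I u < x" | "mu.I u > x" by linarith
      then show "indicator ?J u * f u = indicator {..M x} u * f u - indicator {..L x} u * f u"
      proof cases
        case 1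
        then have "u \<le> M x" "L x \<le> u" using pseudo[OF u01] I_ge[OF u01, of x] by auto
        then show ?thesis using 1 u u01 by (auto split: split_indicator)
      next
        case 2
        then have "u \<le> L x" "u \<le> M x" using I_lt[OF u01 2] L_bounds[of x] by auto
        then show ?thesis using 2 by (auto split: split_indicator)
      next
        case 3
        then have "M x < u" using pseudo[OF u01, of x] by auto
        then show ?thesis using 3 L_bounds[of x] by (auto split: split_indicator)
      qed
    qed
  qed
  also have "\<dots> = (\<integral>u. indicator {..M x} u * f u \<partial>U) - (\<integral>u. indicator {..L x} u * f u \<partial>U)"
    by (rule Bochner_Integration.integral_diff) (auto intro: ind_f_int)
  also have "\<dots> = F (M x) - F (L x)"
    using F_eq[of "M x"] F_eq[of "L x"] M_bounds[of x] L_bounds[of x] by simp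
  finally show ?thesis .
qed

lemma h_atom:
  assumes w: "0 < w" "w < 1" and x: "measure \<mu> {mu.I w} \<noteq> 0"
  shows "h w = g (mu.I w)"
proof -
  define x where "x = mu.I w"
  let ?J = "mu.I -` {x} \<inter> {0<..<1}"
  have JG: "?J \<in> sets G" by (rule in_vimage_algebra) simp
  have JU: "?J \<in> sets U" using measurable_sets[OF I_meas, of "{x}"] space_U by simp
  have "(\<integral>u. indicator ?J u * f u \<partial>U) = (\<integral>u. indicator ?J u * h u \<partial>U)"
    using Gs.real_cond_exp_intA[OF f_int JG] by (simp add: set_lebesgue_integral_def)
  also have "\<dots> = (\<integral>u. indicator ?J u * h w \<partial>U)"
  proof (rule Bochner_Integration.integral_cong[OF refl])
    fix u assume "u \<in> space U"
    show "indicator ?J u * h u = indicator ?J u * h w"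
      using h_const[of u w] w by (auto simp: x_def split: split_indicator)
  qed
  also have "\<dots> = measure U ?J * h w"
    using JU by simp
  also have "measure U ?J = measure \<mu> {x}"
    using measure_distr[OF I_meas, of "{x}"] distr_U space_U by simp
  finally have "measure \<mu> {x} * h w = F (M x) - F (L x)"
    using atom_int[of x] x by (simp add: x_def)
  then show ?thesis using x by (simp add: g_def x_def Lim_L field_simps)
qed

abbreviation "Bset \<equiv> mu.I -` {x. measure \<mu> {x} = 0} \<inter> {0<..<1}"

lemma N_borel: "{x. measure \<mu> {x} = 0} \<in> sets borel"
proof -
  have "{x. measure \<mu> {x} > 0} \<in> sets borel"
    by (rule sets.countable[OF _ mu.countable_atoms]) simp
  then have "- {x. measure \<mu> {x} > 0} \<in> sets borel" by (rule borel_comp)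
  also have "- {x. measure \<mu> {x} > 0} = {x. measure \<mu> {x} = 0}"
    using measure_nonneg[of \<mu>] by (auto simp: order.order_iff_strict)
  finally show ?thesis .
qed

lemma BG: "Bset \<in> sets G"
  by (rule in_vimage_algebra[OF N_borel])

lemma BU: "Bset \<in> sets U"
  using Gs.subalg BG by (auto simp: subalgebra_def)

lemma h_int: "integrable U h"
  by (rule Gs.real_cond_exp_int(1)[OF f_int])

lemma k_int: "integrable U (\<lambda>w. g (mu.I w))"
proof -
  have "integrable U (\<lambda>w. indicator Bset w * f w + (h w - indicator Bset w * h w))"
    using integrable_mult_indicator[OF BU f_int] integrable_mult_indicator[OF BU h_int] h_int
    by (intro Bochner_Integration.integrable_add Bochner_Integration.integrable_diff) simp_all
  moreover have "indicator Bset w * f w + (h w - indicator Bset w * h w) = g (mu.I w)"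
    if "w \<in> space U" for w
    using that g_nonatom[of w] h_atom[of w] by (auto simp: space_U split: split_indicator)
  ultimately show ?thesis
    using Bochner_Integration.integrable_cong[OF refl] by (smt (verit) integrable_cong)
qed

lemma main_ae: "AE w in U. h w = g (mu.I w)"
proof -
  have indBG[measurable]: "(indicator Bset :: real \<Rightarrow> real) \<in> borel_measurable G"
    using BG by simp
  have [measurable]: "f \<in> borel_measurable U" by (rule f_meas)
  have kG[measurable]: "(\<lambda>w. g (mu.I w)) \<in> borel_measurable G" by measurable
  have kU[measurable]: "(\<lambda>w. g (mu.I w)) \<in> borel_measurable U" by measurable
  have indBU[measurable]: "(indicator Bset :: real \<Rightarrow> real) \<in> borel_measurable U"
    using BU by simp
  have E1: "AE w in U. real_cond_exp U G (\<lambda>w. indicator Bset w * f w) w = indicator Bset w * h w"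
    using integrable_mult_indicator[OF BU f_int]
    by (intro Gs.real_cond_exp_mult[OF indBG f_meas]) simp
  have E2: "AE w in U. real_cond_exp U G (\<lambda>w. indicator Bset w * f w) w
      = real_cond_exp U G (\<lambda>w. indicator Bset w * g (mu.I w)) w"
  proof (rule Gs.real_cond_exp_cong)
    show "AE x in U. indicator Bset x * f x = indicator Bset x * g (mu.I x)"
      by (rule AE_I2) (use g_nonatom in \<open>auto simp: space_U split: split_indicator\<close>)
  qed (rule borel_measurable_times[OF indBU], use f_meas kU in simp)+
  have E3: "AE w in U. real_cond_exp U G (\<lambda>w. indicator Bset w * g (mu.I w)) w
      = indicator Bset w * g (mu.I w)"
    using integrable_mult_indicator[OF BU k_int]
    by (intro Gs.real_cond_exp_F_meas) (simp, use indBG kG in measurable)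
  show ?thesis
    using E1 E2 E3 AE_space
  proof (eventually_elim)
    case (elim w)
    then have *: "indicator Bset w * h w = indicator Bset w * g (mu.I w)" by simp
    show ?case
    proof (cases "w \<in> Bset")
      case True
      then show ?thesis using * by simp
    next
      case False
      show ?thesis
      proof (cases "w \<in> {0<..<1}")
        case True
        then show ?thesis using False h_atom[of w] by auto
      next
        case False
        then show ?thesis using elim by (simp add: space_U)
      qed
    qed
  qed
qed

lemma g_int: "integrable \<mu> g"
  using k_int integrable_distr_eq[OF I_meas g_meas] distr_U by simp

lemma Lp_g_k: "in_Lp \<mu> q g = in_Lp U q (\<lambda>w. g (mu.I w))"
  "Lp_norm \<mu> q g = Lp_norm U q (\<lambda>w. g (mu.I w))"
  using Lp_distr[OF I_meas g_meas, of q] distr_U by simp_all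

lemma Lp_k_h: "in_Lp U q (\<lambda>w. g (mu.I w)) = in_Lp U q h"
  "Lp_norm U q (\<lambda>w. g (mu.I w)) = Lp_norm U q h"
proof -
  have m: "(\<lambda>w. g (mu.I w)) \<in> borel_measurable U" by measurable
  have "AE w in U. g (mu.I w) = h w" using main_ae by eventually_elim simp
  from Lp_cong_AE[OF m borel_measurable_cond_exp2 this]
  show "in_Lp U q (\<lambda>w. g (mu.I w)) = in_Lp U q h"
    "Lp_norm U q (\<lambda>w. g (mu.I w)) = Lp_norm U q h" by blast+
qed

lemma h_bound: "AE x in U. \<bar>f x\<bar> \<le> c \<Longrightarrow> AE x in U. \<bar>h x\<bar> \<le> c"
proof -
  assume c: "AE x in U. \<bar>f x\<bar> \<le> c"
  have "AE x in U. f x \<le> c" using c by eventually_elim simp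
  from Gs.real_cond_exp_le_c[OF f_int this]
  have 1: "AE x in U. h x \<le> c" .
  have "AE x in U. f x \<ge> -c" using c by eventually_elim simp
  from Gs.real_cond_exp_ge_c[OF f_int this]
  have 2: "AE x in U. h x \<ge> -c" .
  from 1 2 show ?thesis by eventually_elim simp
qed

lemma nonatomic_k: "(\<forall>x. measure \<mu> {x} = 0) \<Longrightarrow> Lp_norm U q (\<lambda>w. g (mu.I w)) = Lp_norm U q f"
proof -
  assume na: "\<forall>x. measure \<mu> {x} = 0"
  have m: "(\<lambda>w. g (mu.I w)) \<in> borel_measurable U" by measurable
  have "AE w in U. g (mu.I w) = f w"
    by (rule AE_I2) (use na g_nonatom in \<open>auto simp: space_U\<close>)
  from Lp_cong_AE(2)[OF m f_meas this] show ?thesis .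
qed

lemma h_Lp: "in_Lp U p h \<and> Lp_norm U p h \<le> Lp_norm U p f"
proof (cases "p = \<infinity>")
  case True
  then obtain C where C: "AE x in U. \<bar>f x\<bar> \<le> C" using f by (auto simp: in_Lp_def)
  have hm: "h \<in> borel_measurable U" by (rule borel_measurable_cond_exp2)
  have inh: "in_Lp U p h" using True h_bound[OF C] hm by (auto simp: in_Lp_def)
  have mh: "(\<lambda>x. ereal \<bar>h x\<bar>) \<in> borel_measurable U" using hm by measurable
  have mf: "(\<lambda>x. ereal \<bar>f x\<bar>) \<in> borel_measurable U" using f_meas by measurable
  have bC: "esssup U (\<lambda>x. ereal \<bar>f x\<bar>) \<le> ereal C"
    by (rule esssup_I[OF mf]) (use C in \<open>auto elim: eventually_mono\<close>)
  have a0: "0 \<le> esssup U (\<lambda>x. ereal \<bar>h x\<bar>)"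
  proof -
    have "esssup U (\<lambda>x. 0::ereal) \<le> esssup U (\<lambda>x. ereal \<bar>h x\<bar>)"
      by (rule esssup_mono) auto
    moreover have "esssup U (\<lambda>x. 0::ereal) = 0"
      by (rule esssup_const) (use U.emeasure_space_1 in simp)
    ultimately show ?thesis by simp
  qed
  have ab: "esssup U (\<lambda>x. ereal \<bar>h x\<bar>) \<le> esssup U (\<lambda>x. ereal \<bar>f x\<bar>)"
    unfolding esssup_eq_AE[OF mh] esssup_eq_AE[OF mf]
  proof (rule Inf_superset_mono, rule subsetI)
    fix z assume "z \<in> {z. AE x in U. ereal \<bar>f x\<bar> \<le> z}"
    then have z: "AE x in U. ereal \<bar>f x\<bar> \<le> z" by simp
    have "AE x in U. ereal \<bar>h x\<bar> \<le> z"
    proof (cases z)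
      case (real r)
      then have "AE x in U. \<bar>f x\<bar> \<le> r" using z by (auto elim: eventually_mono)
      from h_bound[OF this] show ?thesis using real by (auto elim: eventually_mono)
    next
      case PInf then show ?thesis by simp
    next
      case MInf then show ?thesis using z by (auto elim: eventually_mono)
    qed
    then show "z \<in> {z. AE x in U. ereal \<bar>h x\<bar> \<le> z}" by simp
  qed
  have "real_of_ereal (esssup U (\<lambda>x. ereal \<bar>h x\<bar>)) \<le> real_of_ereal (esssup U (\<lambda>x. ereal \<bar>f x\<bar>))"
    by (rule real_of_ereal_positive_mono[OF a0 ab]) (use bC in auto)
  then show ?thesis using inh True by (simp add: Lp_norm_def)
next
  case False
  define r where "r = enn2real p"
  have "enn2real 1 \<le> enn2real p"
    by (rule enn2real_mono[OF p]) (use False in \<open>simp add: less_top[symmetric]\<close>)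
  then have r1: "1 \<le> r" unfolding r_def by simp
  have intf: "integrable U (\<lambda>x. \<bar>f x\<bar> powr r)" using f False by (simp add: in_Lp_def r_def)
  have J: "AE x in U. \<bar>h x\<bar> powr r \<le> real_cond_exp U G (\<lambda>x. \<bar>f x\<bar> powr r) x"
    by (rule Gs.real_cond_exp_jensens_inequality(2)[OF f_int, where I=UNIV and q="\<lambda>x. \<bar>x\<bar> powr r"])
       (use intf abs_powr_convex[OF r1] in auto)
  have intE: "integrable U (real_cond_exp U G (\<lambda>x. \<bar>f x\<bar> powr r))"
    by (rule Gs.real_cond_exp_int(1)[OF intf])
  have hm: "h \<in> borel_measurable U" by (rule borel_measurable_cond_exp2)
  have inth: "integrable U (\<lambda>x. \<bar>h x\<bar> powr r)"
  proof (rule Bochner_Integration.integrable_bound[OF intE])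
    show "(\<lambda>x. \<bar>h x\<bar> powr r) \<in> borel_measurable U" using hm by measurable
    show "AE x in U. norm (\<bar>h x\<bar> powr r) \<le> norm (real_cond_exp U G (\<lambda>x. \<bar>f x\<bar> powr r) x)"
      using J by eventually_elim auto
  qed
  have "(\<integral>x. \<bar>h x\<bar> powr r \<partial>U) \<le> (\<integral>x. real_cond_exp U G (\<lambda>x. \<bar>f x\<bar> powr r) x \<partial>U)"
    by (rule integral_mono_AE[OF inth intE J])
  also have "\<dots> = (\<integral>x. \<bar>f x\<bar> powr r \<partial>U)"
    by (rule Gs.real_cond_exp_int(2)[OF intf])
  finally have le: "(\<integral>x. \<bar>h x\<bar> powr r \<partial>U) \<le> (\<integral>x. \<bar>f x\<bar> powr r \<partial>U)" .
  have "(\<integral>x. \<bar>h x\<bar> powr r \<partial>U) powr (1 / r) \<le> (\<integral>x. \<bar>f x\<bar> powr r \<partial>U) powr (1 / r)"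
    by (rule powr_mono2) (use le r1 in \<open>auto intro: integral_nonneg_AE\<close>)
  then show ?thesis using False inth hm by (simp add: in_Lp_def Lp_norm_def r_def)
qed

lemma absf_int: "integrable U (\<lambda>u. \<bar>f u\<bar>)"
  using f_int by simp

lemma ind_absf_int: "A \<in> sets borel \<Longrightarrow> integrable U (\<lambda>u. indicator A u * \<bar>f u\<bar>)"
  by (rule Bochner_Integration.integrable_bound[OF absf_int])
     (use f_meas in \<open>auto split: split_indicator\<close>)

definition "V m = (\<integral>u. indicator {..m} u * \<bar>f u\<bar> \<partial>U)"

lemma V_bounds: "0 \<le> V m" "V m \<le> (\<integral>u. \<bar>f u\<bar> \<partial>U)"
proof -
  show "0 \<le> V m" unfolding V_def by (rule integral_nonneg_AE) (auto split: split_indicator)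
  show "V m \<le> (\<integral>u. \<bar>f u\<bar> \<partial>U)" unfolding V_def
    by (rule integral_mono[OF ind_absf_int absf_int]) (auto split: split_indicator)
qed

lemma FM_var: "a \<le> b \<Longrightarrow> \<bar>F (M b) - F (M a)\<bar> \<le> V (M b) - V (M a)"
proof -
  assume ab: "a \<le> b"
  have Mab: "M a \<le> M b" by (rule M_mono[OF ab])
  have "F (M b) - F (M a) = (\<integral>u. indicator {..M b} u * f u \<partial>U) - (\<integral>u. indicator {..M a} u * f u \<partial>U)"
    using F_eq M_bounds by simp
  also have "\<dots> = (\<integral>u. indicator {..M b} u * f u - indicator {..M a} u * f u \<partial>U)"
    by (rule Bochner_Integration.integral_diff[symmetric]) (auto intro: ind_f_int)
  finally have "\<bar>F (M b) - F (M a)\<bar> \<le> (\<integral>u. \<bar>indicator {..M b} u * f u - indicator {..M a} u * f u\<bar> \<partial>U)"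
    using integral_abs_bound by metis
  also have "\<dots> = (\<integral>u. indicator {..M b} u * \<bar>f u\<bar> - indicator {..M a} u * \<bar>f u\<bar> \<partial>U)"
    by (rule Bochner_Integration.integral_cong[OF refl]) (use Mab in \<open>auto split: split_indicator\<close>)
  also have "\<dots> = V (M b) - V (M a)" unfolding V_def
    by (rule Bochner_Integration.integral_diff) (auto intro: ind_absf_int)
  finally show ?thesis .
qed

lemma BV: "bounded_variation (F \<circ> M)"
  unfolding bounded_variation_def
proof (intro exI allI impI)
  fix xs :: "real list" assume s: "sorted xs"
  define W where "W i = V (M (xs ! i))" for i
  have "(\<Sum>i<length xs - 1. \<bar>(F \<circ> M) (xs ! Suc i) - (F \<circ> M) (xs ! i)\<bar>) \<le>
      (\<Sum>i<length xs - 1. W (Suc i) - W i)"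
  proof (rule sum_mono)
    fix i assume "i \<in> {..<length xs - 1}"
    then have "xs ! i \<le> xs ! Suc i" using sorted_nth_mono[OF s, of i "Suc i"] by auto
    then show "\<bar>(F \<circ> M) (xs ! Suc i) - (F \<circ> M) (xs ! i)\<bar> \<le> W (Suc i) - W i"
      using FM_var by (simp add: W_def)
  qed
  also have "\<dots> = W (length xs - 1) - W 0" by (rule sum_lessThan_telescope)
  also have "\<dots> \<le> (\<integral>u. \<bar>f u\<bar> \<partial>U)" using V_bounds[of "M (xs ! (length xs - 1))"] V_bounds[of "M (xs ! 0)"]
    by (simp add: W_def)
  finally show "(\<Sum>i<length xs - 1. \<bar>(F \<circ> M) (xs ! Suc i) - (F \<circ> M) (xs ! i)\<bar>) \<le> (\<integral>u. \<bar>f u\<bar> \<partial>U)" .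
qed

lemma distrib:
  assumes tf: "test_function \<phi>"
  shows "integrable lborel (\<lambda>x. (F \<circ> M) x * deriv \<phi> x) \<and>
          (LINT x|lborel. (F \<circ> M) x * deriv \<phi> x) = - (LINT x|\<mu>. \<phi> x * g x)"
proof -
  obtain R B where R: "0 \<le> R" "\<And>x. R < \<bar>x\<bar> \<Longrightarrow> \<phi> x = 0" "\<And>x. R < \<bar>x\<bar> \<Longrightarrow> deriv \<phi> x = 0"
    "\<And>x. (\<phi> has_real_derivative deriv \<phi> x) (at x)" "continuous_on UNIV (deriv \<phi>)"
    "continuous_on UNIV \<phi>" "\<And>x. \<bar>\<phi> x\<bar> \<le> B"
    using test_props[OF tf] by metis
  have dm[measurable]: "deriv \<phi> \<in> borel_measurable borel" by (rule borel_measurable_continuous_onI[OF R(5)])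
  have dm2[measurable]: "deriv \<phi> \<in> borel_measurable lborel" using dm by simp
  have pm[measurable]: "\<phi> \<in> borel_measurable borel" by (rule borel_measurable_continuous_onI[OF R(6)])
  have fm[measurable]: "f \<in> borel_measurable U" by (rule f_meas)
  interpret P: pair_sigma_finite lborel U
    by (simp add: pair_sigma_finite_def lborel.sigma_finite_measure_axioms U.sigma_finite_measure_axioms)
  define Kf where "Kf x w = (if mu.I w \<le> x then f w else 0) * deriv \<phi> x" for x w
  have Km: "(\<lambda>(x, w). Kf x w) \<in> borel_measurable (lborel \<Otimes>\<^sub>M U)"
    unfolding Kf_def by measurable
  have bm: "(\<lambda>(x, w). \<bar>deriv \<phi> x\<bar> * \<bar>f w\<bar>) \<in> borel_measurable (lborel \<Otimes>\<^sub>M U)"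
    by measurable
  have dint: "integrable lborel (deriv \<phi>)" by (rule test_FTC(2)[OF tf])
  have Kb: "integrable (lborel \<Otimes>\<^sub>M U) (\<lambda>(x, w). \<bar>deriv \<phi> x\<bar> * \<bar>f w\<bar>)"
  proof (rule P.Fubini_integrable[OF bm])
    have "integrable lborel (\<lambda>x. \<bar>deriv \<phi> x\<bar> * (\<integral>w. \<bar>f w\<bar> \<partial>U))"
      using dint by simp
    then show "integrable lborel (\<lambda>x. \<integral>w. norm (case (x, w) of (x, w) \<Rightarrow> \<bar>deriv \<phi> x\<bar> * \<bar>f w\<bar>) \<partial>U)"
      by (simp add: abs_mult)
    show "AE x in lborel. integrable U (\<lambda>w. case (x, w) of (x, w) \<Rightarrow> \<bar>deriv \<phi> x\<bar> * \<bar>f w\<bar>)"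
      using absf_int by simp
  qed
  have Kint: "integrable (lborel \<Otimes>\<^sub>M U) (\<lambda>(x, w). Kf x w)"
  proof (rule Bochner_Integration.integrable_bound[OF Kb Km])
    show "AE z in lborel \<Otimes>\<^sub>M U. norm (case z of (x, w) \<Rightarrow> Kf x w) \<le> norm (case z of (x, w) \<Rightarrow> \<bar>deriv \<phi> x\<bar> * \<bar>f w\<bar>)"
      by (rule AE_I2) (auto simp: Kf_def abs_mult)
  qed
  have inner1: "(\<integral>w. Kf x w \<partial>U) = (F \<circ> M) x * deriv \<phi> x" for x
  proof -
    have "(\<integral>w. Kf x w \<partial>U) = (\<integral>w. indicator {..M x} w * f w * deriv \<phi> x \<partial>U)"
    proof (rule Bochner_Integration.integral_cong[OF refl])
      fix w assume "w \<in> space U"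
      then have "0 < w" "w < 1" by (auto simp: space_U)
      then show "Kf x w = indicator {..M x} w * f w * deriv \<phi> x"
        using pseudo[of w x] by (auto simp: Kf_def split: split_indicator)
    qed
    also have "\<dots> = (\<integral>w. indicator {..M x} w * f w \<partial>U) * deriv \<phi> x"
      by (rule integral_mult_left_zero)
    also have "\<dots> = (F \<circ> M) x * deriv \<phi> x"
      using F_eq[of "M x"] M_bounds[of x] by simp
    finally show ?thesis .
  qed
  have inner2: "(\<integral>x. Kf x w \<partial>lborel) = - (\<phi> (mu.I w) * f w)" for w
  proof -
    have "(\<integral>x. Kf x w \<partial>lborel) = (\<integral>x. f w * (indicator {mu.I w..} x * deriv \<phi> x) \<partial>lborel)"
      by (rule Bochner_Integration.integral_cong[OF refl]) (auto simp: Kf_def split: split_indicator)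
    also have "\<dots> = f w * (\<integral>x. indicator {mu.I w..} x * deriv \<phi> x \<partial>lborel)"
      by (rule integral_mult_right_zero)
    also have "\<dots> = - (\<phi> (mu.I w) * f w)"
      using test_FTC(1)[OF tf, of "mu.I w"] by simp
    finally show ?thesis .
  qed
  have i1: "integrable lborel (\<lambda>x. \<integral>w. Kf x w \<partial>U)"
    using P.integrable_fst'[OF Kint] by simp
  then have intL: "integrable lborel (\<lambda>x. (F \<circ> M) x * deriv \<phi> x)"
    using inner1 by simp
  have "(LINT x|lborel. (F \<circ> M) x * deriv \<phi> x) = (\<integral>x. \<integral>w. Kf x w \<partial>U \<partial>lborel)"
    using inner1 by simp
  also have "\<dots> = (\<integral>w. \<integral>x. Kf x w \<partial>lborel \<partial>U)"
    by (rule P.Fubini_integral[symmetric]) (use Kint in simp)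
  also have "\<dots> = (\<integral>w. - (\<phi> (mu.I w) * f w) \<partial>U)"
    using inner2 by simp
  also have "\<dots> = - (\<integral>w. \<phi> (mu.I w) * f w \<partial>U)" by simp
  finally have LHS: "(LINT x|lborel. (F \<circ> M) x * deriv \<phi> x) = - (\<integral>w. \<phi> (mu.I w) * f w \<partial>U)" .
  have "(LINT x|\<mu>. \<phi> x * g x) = (\<integral>x. \<phi> x * g x \<partial>distr U borel mu.I)"
    using distr_U by simp
  also have "\<dots> = (\<integral>w. \<phi> (mu.I w) * g (mu.I w) \<partial>U)"
    by (rule integral_distr[OF I_meas]) measurable
  also have "\<dots> = (\<integral>w. \<phi> (mu.I w) * h w \<partial>U)"
  proof (rule integral_cong_AE)
    show "AE w in U. \<phi> (mu.I w) * g (mu.I w) = \<phi> (mu.I w) * h w"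
      using main_ae by eventually_elim simp
  qed measurable
  also have "\<dots> = (\<integral>w. \<phi> (mu.I w) * f w \<partial>U)"
  proof (rule Gs.real_cond_exp_intg(2))
    show "integrable U (\<lambda>w. \<phi> (mu.I w) * f w)"
    proof (rule Bochner_Integration.integrable_bound[where f="\<lambda>w. B * \<bar>f w\<bar>"])
      show "integrable U (\<lambda>w. B * \<bar>f w\<bar>)" using absf_int by simp
      show "(\<lambda>w. \<phi> (mu.I w) * f w) \<in> borel_measurable U" by measurable
      show "AE w in U. norm (\<phi> (mu.I w) * f w) \<le> norm (B * \<bar>f w\<bar>)"
      proof (rule AE_I2)
        fix w
        have "\<bar>\<phi> (mu.I w)\<bar> * \<bar>f w\<bar> \<le> B * \<bar>f w\<bar>" by (rule mult_right_mono[OF R(7)]) simp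
        moreover have "0 \<le> B" using R(7)[of 0] by simp
        ultimately show "norm (\<phi> (mu.I w) * f w) \<le> norm (B * \<bar>f w\<bar>)" by (simp add: abs_mult)
      qed
    qed
  qed measurable
  finally show ?thesis using LHS intL by simp
qed

lemma final:
  "bounded_variation (F \<circ> M)
    \<and> integrable \<mu> g
    \<and> (\<forall>\<phi>. test_function \<phi> \<longrightarrow>
          integrable lborel (\<lambda>x. (F \<circ> M) x * deriv \<phi> x) \<and>
          (LINT x|lborel. (F \<circ> M) x * deriv \<phi> x) = - (LINT x|\<mu>. \<phi> x * g x))
    \<and> in_Lp \<mu> p g
    \<and> Lp_norm \<mu> p g \<le> Lp_norm (restrict_space lborel {0<..<1}) p f
    \<and> ((\<forall>x. measure \<mu> {x} = 0) \<longrightarrow>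
          Lp_norm \<mu> p g = Lp_norm (restrict_space lborel {0<..<1}) p f)"
  using BV g_int distrib h_Lp Lp_g_k[of p] Lp_k_h[of p] nonatomic_k[of p] by auto

end

theorem lemma4p2:
  fixes p :: ennreal
    and f :: "real \<Rightarrow> real"
    and \<mu> :: "real measure"
    and F M g :: "real \<Rightarrow> real"
  assumes p: "1 \<le> p"
    and f: "in_Lp (restrict_space lborel {0<..<1}) p f"
    and F_def: "\<And>m. F m = (LINT w:{0..m}|lborel. f w)"
    and mu: "prob_space \<mu>" "sets \<mu> = sets borel"
    and M_def: "\<And>x. M x = measure \<mu> {..x}"
    and g_def: "\<And>x. g x =
          (if measure \<mu> {x} = 0 then f (M x)
           else (F (M x) - F (Lim (at_left x) M)) / measure \<mu> {x})"
  shows "bounded_variation (F \<circ> M)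
    \<and> integrable \<mu> g
    \<and> (\<forall>\<phi>. test_function \<phi> \<longrightarrow>
          integrable lborel (\<lambda>x. (F \<circ> M) x * deriv \<phi> x) \<and>
          (LINT x|lborel. (F \<circ> M) x * deriv \<phi> x) = - (LINT x|\<mu>. \<phi> x * g x))
    \<and> in_Lp \<mu> p g
    \<and> Lp_norm \<mu> p g \<le> Lp_norm (restrict_space lborel {0<..<1}) p f
    \<and> ((\<forall>x. measure \<mu> {x} = 0) \<longrightarrow>
          Lp_norm \<mu> p g = Lp_norm (restrict_space lborel {0<..<1}) p f)"
  by (rule final[OF p f F_def mu M_def g_def])

end
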